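(* Fix an integer base $B\ge 2$. Let $m$ be a positive integer such that $mn$ is economical for every economical positive integer $n$. Then $m$ is frugal.
   Context: For a positive integer $n$, $\delta(n)$ is the number of digits of $n$ in base $B$, i.e. $\delta(n)=k$ iff $B^{k-1}\le n<B^k$. Define $\delta'(1)=0$ and $\delta'(a)=\delta(a)$ for $a>1$. If $n=\prod_{i} p_i^{a_i}$ is the prime power factorisation, set $\phi(n)=\sum_i \big(\delta(p_i)+\delta'(a_i)\big)$ (with $\phi(1)=0$), and $h(n)=\delta(n)-\phi(n)$. $n$ is economical if $h(n)\ge0$ and frugal if $h(n)>0$. *)

theory Defs
  imports "HOL-Computational_Algebra.Primes"
begin

definition num_digits :: "nat \<Rightarrow> nat \<Rightarrow> nat" where
  "num_digits B n = (LEAST k. n < B ^ k)"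

definition num_digits' :: "nat \<Rightarrow> nat \<Rightarrow> nat" where
  "num_digits' B a = (if a = 1 then 0 else num_digits B a)"

text \<open>Number of digits needed to write the prime factorisation of n.\<close>
definition fact_digits :: "nat \<Rightarrow> nat \<Rightarrow> nat" where
  "fact_digits B n =
     (\<Sum>p\<in>prime_factors n. num_digits B p + num_digits' B (multiplicity p n))"

definition h_fun :: "nat \<Rightarrow> nat \<Rightarrow> int" where
  "h_fun B n = int (num_digits B n) - int (fact_digits B n)"

definition economical :: "nat \<Rightarrow> nat \<Rightarrow> bool" where
  "economical B n \<longleftrightarrow> h_fun B n \<ge> 0"

definition frugal :: "nat \<Rightarrow> nat \<Rightarrow> bool" where
  "frugal B n \<longleftrightarrow> h_fun B n > 0"

end

theory Submission
  imports Defs "HOL-Analysis.Analysis"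
begin

lemma nd_less:
  assumes "B \<ge> 2" shows "n < B ^ num_digits B n"
proof -
  have "n < 2 ^ n" by (rule less_exp)
  also have "\<dots> \<le> B ^ n" using assms by (simp add: power_mono)
  finally have "n < B ^ n" .
  then show ?thesis unfolding num_digits_def by (rule LeastI)
qed

lemma nd_ge:
  assumes "B \<ge> 2" "n > 0" shows "B ^ (num_digits B n - 1) \<le> n" "num_digits B n > 0"
proof -
  have pos: "num_digits B n > 0"
  proof (rule ccontr)
    assume "\<not> ?thesis" then have "num_digits B n = 0" by simp
    with nd_less[OF assms(1), of n] assms(2) show False by simp
  qed
  show "num_digits B n > 0" by (rule pos)
  have "\<not> n < B ^ (num_digits B n - 1)"
    unfolding num_digits_def
    by (rule not_less_Least) (use pos in \<open>simp add: num_digits_def\<close>)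
  then show "B ^ (num_digits B n - 1) \<le> n" by simp
qed

lemma nd_eq:
  assumes "B \<ge> 2" "B ^ (k - 1) \<le> n" "n < B ^ k" "k > 0"
  shows "num_digits B n = k"
  unfolding num_digits_def
proof (rule Least_equality)
  show "n < B ^ k" by fact
  fix y assume y: "n < B ^ y"
  show "k \<le> y"
  proof (rule ccontr)
    assume "\<not> k \<le> y" then have "y \<le> k - 1" by simp
    then have "B ^ y \<le> B ^ (k - 1)" using assms(1) by (simp add: power_increasing)
    with y assms(2) show False by simp
  qed
qed

lemma fd_mult_coprime:
  assumes "a > 0" "b > 0" "coprime a b"
  shows "fact_digits B (a * b) = fact_digits B a + fact_digits B b"
proof -
  have pf: "prime_factors (a * b) = prime_factors a \<union> prime_factors b"
    using assms by (simp add: prime_factors_product)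
  have disj: "prime_factors a \<inter> prime_factors b = {}"
  proof (rule ccontr)
    assume "\<not> ?thesis" then obtain p where "p \<in> prime_factors a" "p \<in> prime_factors b" by blast
    then have "prime p" "p dvd a" "p dvd b" by auto
    with assms(3) show False
      by (metis coprime_common_divisor not_prime_unit)
  qed
  have ma: "multiplicity p (a * b) = multiplicity p a" if "p \<in> prime_factors a" for p
  proof -
    have "p \<notin> prime_factors b" using disj that by blast
    then have "\<not> p dvd b" using that assms by (auto simp: in_prime_factors_iff)
    then have "multiplicity p b = 0" by (rule not_dvd_imp_multiplicity_0)
    moreover have "prime p" using that by auto
    ultimately show ?thesis using assms
      by (simp add: prime_elem_multiplicity_mult_distrib)
  qed
  have mb: "multiplicity p (a * b) = multiplicity p b" if "p \<in> prime_factors b" for p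
  proof -
    have "p \<notin> prime_factors a" using disj that by blast
    then have "\<not> p dvd a" using that assms by (auto simp: in_prime_factors_iff)
    then have "multiplicity p a = 0" by (rule not_dvd_imp_multiplicity_0)
    moreover have "prime p" using that by auto
    ultimately show ?thesis using assms
      by (simp add: prime_elem_multiplicity_mult_distrib)
  qed
  have "fact_digits B (a * b) = (\<Sum>p\<in>prime_factors a \<union> prime_factors b.
          num_digits B p + num_digits' B (multiplicity p (a * b)))"
    unfolding fact_digits_def pf ..
  also have "\<dots> = (\<Sum>p\<in>prime_factors a. num_digits B p + num_digits' B (multiplicity p (a * b)))
      + (\<Sum>p\<in>prime_factors b. num_digits B p + num_digits' B (multiplicity p (a * b)))"
    by (rule sum.union_disjoint) (use disj in auto)
  also have "\<dots> = fact_digits B a + fact_digits B b"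
    unfolding fact_digits_def using ma mb by simp
  finally show ?thesis .
qed

lemma fd_prime_power:
  assumes "prime q" "k > 0"
  shows "fact_digits B (q ^ k) = num_digits B q + num_digits' B k"
proof -
  have "prime_factors (q ^ k) = {q}" using assms
    by (simp add: prime_factorization_prime_power)
  then show ?thesis unfolding fact_digits_def using assms by simp
qed

lemma fd_prod_primes:
  assumes "finite P" "\<forall>p\<in>P. prime p"
  shows "fact_digits B (\<Prod>P) = (\<Sum>p\<in>P. num_digits B p)"
  using assms
proof (induction P rule: finite_induct)
  case empty then show ?case by (simp add: fact_digits_def)
next
  case (insert p P)
  have pp: "prime p" using insert by auto
  have pos: "\<Prod>P > 0" using insert by (auto intro: prime_gt_0_nat)
  have cop: "coprime p (\<Prod>P)"
  proof (rule prime_imp_coprime[OF pp])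
    show "\<not> p dvd \<Prod>P"
    proof
      assume "p dvd \<Prod>P"
      then obtain r where "r \<in> P" "p dvd r" using pp insert(1)
        by (metis prime_dvd_prod_iff)
      then have "p = r" using insert(4) pp by (metis insert_iff primes_dvd_imp_eq)
      with \<open>r \<in> P\<close> insert(2) show False by simp
    qed
  qed
  have "fact_digits B (\<Prod>(insert p P)) = fact_digits B (p * \<Prod>P)"
    using insert by simp
  also have "\<dots> = fact_digits B p + fact_digits B (\<Prod>P)"
    by (rule fd_mult_coprime) (use pp pos cop prime_gt_0_nat in auto)
  also have "fact_digits B p = num_digits B p"
    using fd_prime_power[OF pp, of 1 B] by (simp add: num_digits'_def)
  finally show ?case using insert by simp
qed



lemma smooth_sum:
  assumes "finite S" "\<forall>p\<in>S. prime p"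
  shows "finite U \<Longrightarrow> \<forall>n\<in>U. n > 0 \<and> prime_factors n \<subseteq> S \<Longrightarrow>
    (\<Sum>n\<in>U. 1 / real n) \<le> (\<Prod>p\<in>S. real p / (real p - 1))"
  using assms
proof (induction S arbitrary: U rule: finite_induct)
  case empty
  have "U \<subseteq> {1}"
  proof
    fix n assume "n \<in> U"
    then have "n > 0" "prime_factors n = {}" using empty by auto
    then have "n = 1"
      by (metis prime_factorization_empty_iff set_mset_eq_empty_iff nat_dvd_1_iff_1 not_gr0)
    then show "n \<in> {1}" by simp
  qed
  then have "(\<Sum>n\<in>U. 1 / real n) \<le> (\<Sum>n\<in>{1}. 1 / real n)"
    by (intro sum_mono2) auto
  then show ?case by simp
next
  case (insert p S U)
  have pp: "prime p" using insert by auto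
  have p2: "real p \<ge> 2" using prime_ge_2_nat[OF pp] by simp
  define g where "g n = multiplicity p n" for n
  define T where "T = g ` U"
  define PS where "PS = (\<Prod>p\<in>S. real p / (real p - 1))"
  have PSnn: "PS \<ge> 0" unfolding PS_def
  proof (rule prod_nonneg)
    fix q assume "q \<in> S" then have "prime q" using insert.prems by auto
    then have "real q \<ge> 2" using prime_ge_2_nat by (metis of_nat_le_iff of_nat_numeral)
    then show "0 \<le> real q / (real q - 1)" by simp
  qed
  have finT: "finite T" unfolding T_def using insert by auto
  have grp: "(\<Sum>n\<in>U. 1 / real n) = (\<Sum>k\<in>T. \<Sum>n\<in>{n\<in>U. g n = k}. 1 / real n)"
    by (rule sum.group[symmetric]) (use insert finT T_def in auto)
  have blk: "(\<Sum>n\<in>{n\<in>U. g n = k}. 1 / real n) \<le> (1 / real p) ^ k * PS" for k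
  proof -
    define Uk where "Uk = {n\<in>U. g n = k}"
    define r where "r n = n div p ^ k" for n
    have dec: "n = p ^ k * r n" if "n \<in> Uk" for n
      using that unfolding Uk_def g_def r_def by (auto simp: multiplicity_dvd)
    have inj: "inj_on r Uk"
    proof
      fix x y assume "x \<in> Uk" "y \<in> Uk" "r x = r y"
      then show "x = y" using dec by metis
    qed
    have rpos: "r n > 0" if "n \<in> Uk" for n
      using dec[OF that] that insert.prems unfolding Uk_def by (metis (no_types, lifting) gr0I mem_Collect_eq mult_0_right)
    have rpf: "prime_factors (r n) \<subseteq> S" if "n \<in> Uk" for n
    proof
      fix q assume q: "q \<in> prime_factors (r n)"
      have npos: "n > 0" using that insert.prems unfolding Uk_def by auto
      have "q dvd r n" "prime q" using q by auto
      then have "q dvd n" using dec[OF that] by (metis dvd_mult)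
      then have "q \<in> prime_factors n" using \<open>prime q\<close> npos by (auto simp: in_prime_factors_iff)
      then have qin: "q \<in> insert p S" using that insert.prems unfolding Uk_def by auto
      have "\<not> p dvd n div p ^ multiplicity p n"
        by (rule multiplicity_decompose) (use npos pp in \<open>auto simp: not_prime_unit\<close>)
      then have "\<not> p dvd r n" using that unfolding Uk_def g_def r_def by simp
      then have "q \<noteq> p" using \<open>q dvd r n\<close> by auto
      then show "q \<in> S" using qin by auto
    qed
    have "(\<Sum>n\<in>Uk. 1 / real n) = (\<Sum>n\<in>Uk. (1 / real p) ^ k * (1 / real (r n)))"
    proof (rule sum.cong[OF refl])
      fix n assume "n \<in> Uk"
      then have "real n = real p ^ k * real (r n)" using dec by (metis of_nat_mult of_nat_power)
      then show "1 / real n = (1 / real p) ^ k * (1 / real (r n))" by (simp add: power_divide)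
    qed
    also have "\<dots> = (1 / real p) ^ k * (\<Sum>n\<in>Uk. 1 / real (r n))"
      by (simp add: sum_distrib_left)
    also have "(\<Sum>n\<in>Uk. 1 / real (r n)) = (\<Sum>m\<in>r ` Uk. 1 / real m)"
      by (rule sum.reindex[OF inj, symmetric, unfolded comp_def])
    also have "(\<Sum>m\<in>r ` Uk. 1 / real m) \<le> PS"
      unfolding PS_def
      by (rule insert.IH) (use insert.prems rpos rpf Uk_def in auto)
    finally show ?thesis unfolding Uk_def
      by (simp add: mult_left_mono)
  qed
  have "(\<Sum>n\<in>U. 1 / real n) \<le> (\<Sum>k\<in>T. (1 / real p) ^ k * PS)"
    unfolding grp by (rule sum_mono) (rule blk)
  also have "\<dots> = (\<Sum>k\<in>T. (1 / real p) ^ k) * PS" by (simp add: sum_distrib_right)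
  also have "(\<Sum>k\<in>T. (1 / real p) ^ k) \<le> (\<Sum>k. (1 / real p) ^ k)"
    by (rule sum_le_suminf) (use finT p2 in \<open>auto intro!: summable_geometric\<close>)
  also have "(\<Sum>k. (1 / real p) ^ k) = real p / (real p - 1)"
    using p2 by (subst suminf_geometric) (auto simp: field_simps)
  finally have "(\<Sum>n\<in>U. 1 / real n) \<le> real p / (real p - 1) * PS"
    using PSnn by (simp add: mult_right_mono)
  then show ?case unfolding PS_def using insert by simp
qed

definition dd :: "nat \<Rightarrow> nat \<Rightarrow> real" where
  "dd B p = real (num_digits B p) - log (real B) (real p)"

definition PSet :: "nat \<Rightarrow> nat \<Rightarrow> nat set" where
  "PSet K x = {p. prime p \<and> K < p \<and> p \<le> x}"

lemma finite_PSet [simp]: "finite (PSet K x)"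
  unfolding PSet_def by (rule finite_subset[of _ "{..x}"]) auto

lemma dd_le1:
  assumes "B \<ge> 2" "p > 0" shows "dd B p \<le> 1"
proof -
  have "B ^ (num_digits B p - 1) \<le> p" using nd_ge[OF assms] by simp
  then have "real B ^ (num_digits B p - 1) \<le> real p" by (metis of_nat_le_iff of_nat_power)
  then have "log (real B) (real B ^ (num_digits B p - 1)) \<le> log (real B) (real p)"
    using assms by (subst log_le_cancel_iff) auto
  then have "real (num_digits B p - 1) \<le> log (real B) (real p)"
    using assms by (simp add: log_nat_power)
  then show ?thesis unfolding dd_def using nd_ge(2)[OF assms] by linarith
qed

lemma dd_ge:
  assumes "B \<ge> 2" "prime p"
  shows "ln (real p / (real p - 1)) \<le> 2 * ln (real B) * dd B p"
proof -
  have p2: "real p \<ge> 2" using prime_ge_2_nat[OF assms(2)] by (metis of_nat_le_iff of_nat_numeral)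
  have "p < B ^ num_digits B p" by (rule nd_less[OF assms(1)])
  then have "real p + 1 \<le> real B ^ num_digits B p" by (metis Suc_leI of_nat_Suc of_nat_le_iff of_nat_power add.commute)
  then have "log (real B) (real p + 1) \<le> log (real B) (real B ^ num_digits B p)"
    using assms p2 by (subst log_le_cancel_iff) auto
  then have "log (real B) (real p + 1) \<le> real (num_digits B p)"
    using assms by (simp add: log_nat_power)
  then have "ln (real p + 1) / ln (real B) \<le> real (num_digits B p)"
    by (simp add: log_def)
  then have h1: "ln (real p + 1) \<le> ln (real B) * real (num_digits B p)"
    using assms by (simp add: divide_le_eq mult.commute)
  have dd': "ln (real B) * dd B p = ln (real B) * real (num_digits B p) - ln (real p)"
    unfolding dd_def log_def using assms by (simp add: field_simps)
  have "ln (real p / (real p - 1)) \<le> ln (((real p + 1) / real p) ^ 2)"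
  proof (subst ln_le_cancel_iff)
    show "0 < real p / (real p - 1)" using p2 by simp
    show "0 < ((real p + 1) / real p)\<^sup>2" using p2 by simp
    have "real p * real p * real p \<le> (real p - 1) * (real p + 1) ^ 2"
    proof -
      have e: "(real p - 1) * (real p + 1) ^ 2 - real p * real p * real p = real p * (real p - 1) - 1"
        by (simp add: power2_eq_square algebra_simps)
      have "real p * (real p - 1) \<ge> 2 * 1" using p2 by (intro mult_mono) auto
      then show ?thesis using e by linarith
    qed
    then show "real p / (real p - 1) \<le> ((real p + 1) / real p)\<^sup>2"
      using p2 by (simp add: power2_eq_square field_simps)
  qed
  also have "\<dots> = 2 * (ln (real p + 1) - ln (real p))"
    using p2 by (simp add: ln_realpow ln_div)
  also have "\<dots> \<le> 2 * ln (real B) * dd B p" using h1 dd' by simp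
  finally show ?thesis .
qed

lemma harm_prod:
  "ln (real x + 1) \<le> (\<Prod>p\<in>{p. prime p \<and> p \<le> x}. real p / (real p - 1))"
proof -
  have "ln (real x + 1) \<le> (harm x :: real)" by (rule ln_le_harm)
  also have "(harm x :: real) = (\<Sum>n\<in>{1..x}. 1 / real n)"
    unfolding harm_def by (simp add: inverse_eq_divide)
  also have "\<dots> \<le> (\<Prod>p\<in>{p. prime p \<and> p \<le> x}. real p / (real p - 1))"
  proof (rule smooth_sum)
    show "finite {p. prime p \<and> p \<le> x}" by (rule finite_subset[of _ "{..x}"]) auto
    show "\<forall>n\<in>{1..x}. 0 < n \<and> prime_factors n \<subseteq> {p. prime p \<and> p \<le> x}"
    proof
      fix n assume n: "n \<in> {1..x}"
      show "0 < n \<and> prime_factors n \<subseteq> {p. prime p \<and> p \<le> x}"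
      proof
        show "0 < n" using n by auto
        show "prime_factors n \<subseteq> {p. prime p \<and> p \<le> x}"
        proof
          fix q assume "q \<in> prime_factors n"
          then have "prime q" "q dvd n" by auto
          then have "q \<le> n" using n by (auto intro: dvd_imp_le)
          then show "q \<in> {p. prime p \<and> p \<le> x}" using n \<open>prime q\<close> by auto
        qed
      qed
    qed
  qed auto
  finally show ?thesis .
qed

lemma prod_split_K:
  "(\<Prod>p\<in>{p. prime p \<and> p \<le> x}. real p / (real p - 1)) \<le>
   (\<Prod>p\<in>{p. prime p \<and> p \<le> K}. real p / (real p - 1)) * (\<Prod>p\<in>PSet K x. real p / (real p - 1))"
proof -
  let ?f = "\<lambda>p. real p / (real p - 1)"
  have ge1: "1 \<le> ?f p" if "prime p" for p
  proof -
    have "real p \<ge> 2" using prime_ge_2_nat[OF that] by (metis of_nat_le_iff of_nat_numeral)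
    then show ?thesis by simp
  qed
  have f1: "finite {p. prime p \<and> p \<le> K}" by (rule finite_subset[of _ "{..K}"]) auto
  have "(\<Prod>p\<in>{p. prime p \<and> p \<le> x}. ?f p) \<le> (\<Prod>p\<in>{p. prime p \<and> p \<le> K} \<union> PSet K x. ?f p)"
    by (rule prod_mono2) (use f1 ge1 in \<open>auto simp: PSet_def intro: less_imp_le[OF order.strict_trans2[OF zero_less_one]]\<close>)
  also have "\<dots> = (\<Prod>p\<in>{p. prime p \<and> p \<le> K}. ?f p) * (\<Prod>p\<in>PSet K x. ?f p)"
    by (rule prod.union_disjoint) (use f1 in \<open>auto simp: PSet_def\<close>)
  finally show ?thesis .
qed

definition DD :: "nat \<Rightarrow> nat \<Rightarrow> nat \<Rightarrow> real" where
  "DD B K x = (\<Sum>p\<in>PSet K x. dd B p)"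

lemma DD_unbounded:
  assumes "B \<ge> 2" shows "\<exists>x. G \<le> DD B K x"
proof -
  let ?f = "\<lambda>p. real p / (real p - 1)"
  define C where "C = (\<Prod>p\<in>{p. prime p \<and> p \<le> K}. ?f p)"
  have fpos: "?f p > 0" if "prime p" for p
  proof -
    have "real p \<ge> 2" using prime_ge_2_nat[OF that] by (metis of_nat_le_iff of_nat_numeral)
    then show ?thesis by simp
  qed
  have Cpos: "C > 0" unfolding C_def by (rule prod_pos) (use fpos in auto)
  have lnB: "ln (real B) > 0" using assms by simp
  define Y where "Y = C * exp (2 * ln (real B) * G)"
  define x where "x = nat \<lceil>exp Y\<rceil>"
  have "exp Y \<le> real x + 1" unfolding x_def by linarith
  then have "ln (exp Y) \<le> ln (real x + 1)" by (subst ln_le_cancel_iff) auto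
  then have "Y \<le> ln (real x + 1)" by simp
  also have "\<dots> \<le> C * (\<Prod>p\<in>PSet K x. ?f p)"
    using harm_prod[of x] prod_split_K[of x K] unfolding C_def by linarith
  finally have E: "exp (2 * ln (real B) * G) \<le> (\<Prod>p\<in>PSet K x. ?f p)"
    unfolding Y_def using Cpos by (simp add: mult_le_cancel_left_pos)
  have Ppos: "0 < (\<Prod>p\<in>PSet K x. ?f p)"
    using E exp_gt_zero[of "2 * ln (real B) * G"] by linarith
  have "ln (exp (2 * ln (real B) * G)) \<le> ln (\<Prod>p\<in>PSet K x. ?f p)"
    using E Ppos by (subst ln_le_cancel_iff) auto
  then have "2 * ln (real B) * G \<le> ln (\<Prod>p\<in>PSet K x. ?f p)" by simp
  also have "\<dots> = (\<Sum>p\<in>PSet K x. ln (?f p))"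
    by (rule ln_prod) (use fpos in \<open>auto simp: PSet_def\<close>)
  also have "\<dots> \<le> (\<Sum>p\<in>PSet K x. 2 * ln (real B) * dd B p)"
    by (rule sum_mono) (use dd_ge[OF assms] in \<open>auto simp: PSet_def\<close>)
  also have "\<dots> = 2 * ln (real B) * DD B K x"
    unfolding DD_def by (simp add: sum_distrib_left)
  finally have "G \<le> DD B K x" using lnB by simp
  then show ?thesis by blast
qed

lemma crossing_nat:
  fixes f :: "nat \<Rightarrow> real"
  assumes "f 0 \<le> G" "\<And>x. f (Suc x) \<le> f x + 1" "\<exists>x. G \<le> f x"
  shows "\<exists>x. G \<le> f x \<and> f x < G + 1"
proof -
  define x where "x = (LEAST x. G \<le> f x)"
  have gx: "G \<le> f x" unfolding x_def using assms(3) by (metis LeastI)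
  show ?thesis
  proof (cases x)
    case 0
    with gx assms(1) show ?thesis by auto
  next
    case (Suc y)
    have "\<not> G \<le> f y" unfolding x_def
      using Suc not_less_Least[of y "\<lambda>x. G \<le> f x"] x_def by auto
    then have "f x < G + 1" using assms(2)[of y] Suc by simp
    with gx show ?thesis by blast
  qed
qed

lemma DD_crossing:
  assumes "B \<ge> 2" "G \<ge> 0"
  shows "\<exists>x. G \<le> DD B K x \<and> DD B K x < G + 1"
proof (rule crossing_nat)
  have "PSet K 0 = {}" unfolding PSet_def by auto
  then show "DD B K 0 \<le> G" using assms by (simp add: DD_def)
  show "\<exists>x. G \<le> DD B K x" by (rule DD_unbounded[OF assms(1)])
  fix x
  show "DD B K (Suc x) \<le> DD B K x + 1"
  proof (cases "prime (Suc x) \<and> K < Suc x")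
    case True
    then have "PSet K (Suc x) = insert (Suc x) (PSet K x)" unfolding PSet_def by auto
    moreover have "Suc x \<notin> PSet K x" unfolding PSet_def by auto
    ultimately have "DD B K (Suc x) = dd B (Suc x) + DD B K x" unfolding DD_def by simp
    then show ?thesis using dd_le1[OF assms(1), of "Suc x"] by simp
  next
    case False
    then have "PSet K (Suc x) = PSet K x" unfolding PSet_def by (auto simp: le_Suc_eq)
    then show ?thesis unfolding DD_def by simp
  qed
qed

lemma irrat_log_ratio:
  assumes "prime q1" "prime q2" "q1 \<noteq> q2"
  shows "ln (real q1) / ln (real q2) \<notin> \<rat>"
proof
  assume "ln (real q1) / ln (real q2) \<in> \<rat>"
  then obtain a b :: int where ab: "b > 0" "ln (real q1) / ln (real q2) = of_int a / of_int b"
    by (metis Rats_cases')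
  have l1: "ln (real q1) > 0" using prime_gt_1_nat[OF assms(1)] by simp
  have l2: "ln (real q2) > 0" using prime_gt_1_nat[OF assms(2)] by simp
  have eq: "of_int b * ln (real q1) = of_int a * ln (real q2)"
    using ab l2 by (simp add: field_simps)
  have "a > 0"
  proof (rule ccontr)
    assume "\<not> a > 0"
    then have "of_int a * ln (real q2) \<le> 0" using l2 by (simp add: mult_nonpos_nonneg)
    moreover have "of_int b * ln (real q1) > 0" using ab(1) l1 by simp
    ultimately show False using eq by simp
  qed
  define a' where "a' = nat a"
  define b' where "b' = nat b"
  have "real b' * ln (real q1) = real a' * ln (real q2)"
    using eq \<open>a > 0\<close> ab(1) unfolding a'_def b'_def by simp
  then have "ln (real q1 ^ b') = ln (real q2 ^ a')"
    using l1 l2 by (simp add: ln_realpow)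
  then have "real q1 ^ b' = real q2 ^ a'"
    using prime_gt_1_nat[OF assms(1)] prime_gt_1_nat[OF assms(2)] by (subst (asm) ln_inj_iff) auto
  then have "q1 ^ b' = q2 ^ a'" by (metis of_nat_eq_iff of_nat_power)
  moreover have "b' > 0" using ab(1) unfolding b'_def by simp
  ultimately have "q1 dvd q2 ^ a'" by (metis dvd_power dvd_refl)
  then have "q1 dvd q2" by (rule prime_dvd_power[OF assms(1)])
  then show False using assms by (metis primes_dvd_imp_eq)
qed

lemma small_step:
  fixes \<alpha> \<beta> \<epsilon> :: real
  assumes "\<alpha> > 0" "\<beta> > 0" "\<alpha> / \<beta> \<notin> \<rat>" "\<epsilon> > 0"
  shows "\<exists>u v::nat. u > 0 \<and> 0 < real u * \<alpha> - real v * \<beta> \<and> real u * \<alpha> - real v * \<beta> < \<epsilon>"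
proof -
  define t where "t = min (1/2) (\<epsilon> / (2 * \<beta>))"
  have t: "0 < t" "t \<le> 1" using assms unfolding t_def by auto
  obtain k where k: "k > 0" "\<bar>frac (real k * (\<alpha> / \<beta>)) - t\<bar> < t"
    using Kronecker_approx_1_explicit[OF assms(3) less_imp_le[OF t(1)] t(2) t(1)] by blast
  define v where "v = nat \<lfloor>real k * (\<alpha> / \<beta>)\<rfloor>"
  have nn: "real k * (\<alpha> / \<beta>) \<ge> 0" using assms by simp
  have vv: "real v = of_int \<lfloor>real k * (\<alpha> / \<beta>)\<rfloor>" unfolding v_def using nn by simp
  have fr: "frac (real k * (\<alpha> / \<beta>)) = real k * (\<alpha> / \<beta>) - real v"
    unfolding frac_def vv by simp
  have "real k * \<alpha> - real v * \<beta> = \<beta> * frac (real k * (\<alpha> / \<beta>))"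
    unfolding fr using assms by (simp add: field_simps)
  moreover have "0 < frac (real k * (\<alpha> / \<beta>))" "frac (real k * (\<alpha> / \<beta>)) < 2 * t"
    using k(2) unfolding abs_less_iff by linarith+
  moreover have "\<beta> * (2 * t) \<le> \<epsilon>" using assms unfolding t_def
    by (auto simp: min_def field_simps split: if_splits)
  ultimately have "0 < real k * \<alpha> - real v * \<beta>" "real k * \<alpha> - real v * \<beta> < \<epsilon>"
    using assms(2) by (auto intro: mult_pos_pos order.strict_trans2[OF mult_strict_left_mono])
  then show ?thesis using k(1) by blast
qed

lemma sq_le_2pow: "n \<ge> 4 \<Longrightarrow> n * n \<le> (2::nat) ^ n"
proof (induction n rule: dec_induct)
  case base then show ?case by simp
next
  case (step n)
  have "Suc n * Suc n = n * n + 2 * n + 1" by simp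
  also have "\<dots> \<le> n * n + n * n"
  proof -
    have "4 * n \<le> n * n" using step(1) by (rule mult_le_mono1)
    then show ?thesis using step(1) by linarith
  qed
  also have "\<dots> \<le> 2 ^ Suc n" using step(3) by simp
  finally show ?case .
qed

lemma growth:
  fixes \<alpha> R :: real
  assumes "\<alpha> > 0" "B \<ge> 2"
  shows "\<exists>a. a \<ge> a1 \<and> real a + R \<le> real B ^ a * \<alpha>"
proof -
  define a where "a = max a1 (max 4 (nat \<lceil>max (2 / \<alpha>) R\<rceil>))"
  have a4: "a \<ge> 4" and aa: "real a \<ge> 2 / \<alpha>" and aR: "real a \<ge> R" and a1: "a \<ge> a1"
    unfolding a_def by (auto simp: le_max_iff_disj) linarith+
  have "real (a * a) \<le> real (2 ^ a)" using sq_le_2pow[OF a4] by (simp only: of_nat_le_iff)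
  also have "\<dots> \<le> real B ^ a" using assms(2) by (simp add: power_mono)
  finally have sq: "real a * real a \<le> real B ^ a" by simp
  have "real a * \<alpha> \<ge> 2" using aa assms(1) by (simp add: field_simps)
  then have "real a * 2 \<le> real a * (real a * \<alpha>)" by (intro mult_left_mono) auto
  then have "real a + R \<le> real a * (real a * \<alpha>)" using aR by linarith
  also have "\<dots> = (real a * real a) * \<alpha>" by simp
  also have "\<dots> \<le> real B ^ a * \<alpha>" using sq assms(1) by (simp add: mult_right_mono)
  finally show ?thesis using a1 by blast
qed

lemma pow_le_of_log:
  assumes "B \<ge> 2" "n > 0" "real k \<le> log (real B) (real n)"
  shows "B ^ k \<le> n"
proof -
  have "log (real B) (real B ^ k) \<le> log (real B) (real n)" using assms by (simp add: log_nat_power)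
  then have "real B ^ k \<le> real n" using assms by (subst (asm) log_le_cancel_iff) auto
  then show ?thesis by (metis of_nat_le_iff of_nat_power)
qed

lemma less_pow_of_log:
  assumes "B \<ge> 2" "n > 0" "log (real B) (real n) < real k"
  shows "n < B ^ k"
proof -
  have "log (real B) (real n) < log (real B) (real B ^ k)" using assms by (simp add: log_nat_power)
  then have "real n < real B ^ k" using assms by (subst (asm) log_less_cancel_iff) auto
  then show ?thesis by (metis of_nat_less_iff of_nat_power)
qed

lemma dd_pos:
  assumes "B \<ge> 2" "p > 0" shows "dd B p > 0"
proof -
  have "p < B ^ num_digits B p" by (rule nd_less[OF assms(1)])
  then have "real p < real B ^ num_digits B p" by (metis of_nat_less_iff of_nat_power)
  then have "log (real B) (real p) < log (real B) (real B ^ num_digits B p)"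
    using assms by (subst log_less_cancel_iff) auto
  then show ?thesis unfolding dd_def using assms by (simp add: log_nat_power)
qed

lemma log_prod_nat:
  assumes "finite P" "\<forall>p\<in>P. p > 0"
  shows "log b (real (\<Prod>P)) = (\<Sum>p\<in>P. log b (real p))"
  using assms
proof (induction P rule: finite_induct)
  case empty then show ?case by simp
next
  case (insert p P)
  have "real (\<Prod>(insert p P)) = real p * real (\<Prod>P)" using insert by simp
  moreover have "real p > 0" "real (\<Prod>P) > 0" using insert by (auto simp: prod_pos)
  ultimately show ?case using insert by (simp add: log_mult_pos)
qed

lemma witness:
  assumes B: "B \<ge> 2" and m: "m > 0"
  shows "\<exists>n>0. coprime m n \<and> fact_digits B n = num_digits B n \<and>
           m * n < B ^ (num_digits B m + num_digits B n - 1)"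
proof -
  define \<epsilon> where "\<epsilon> = dd B m"
  have \<epsilon>: "0 < \<epsilon>" "\<epsilon> \<le> 1" using dd_pos[OF B m] dd_le1[OF B m] \<epsilon>_def by auto
  obtain q1 where q1: "prime q1" "m < q1" using bigger_prime by blast
  obtain q2 where q2: "prime q2" "q1 < q2" using bigger_prime by blast
  have q1g: "q1 \<ge> 2" "q2 \<ge> 2" using q1 q2 prime_ge_2_nat by auto
  have Br: "real B > 1" using B by simp
  define \<alpha> where "\<alpha> = log (real B) (real q1)"
  define \<beta> where "\<beta> = log (real B) (real q2)"
  have \<alpha>pos: "\<alpha> > 0" unfolding \<alpha>_def using Br q1g by simp
  have \<beta>pos: "\<beta> > 0" unfolding \<beta>_def using Br q1g by simp
  have "\<alpha> / \<beta> = ln (real q1) / ln (real q2)"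
    unfolding \<alpha>_def \<beta>_def log_def using Br by (simp add: field_simps)
  then have irr: "\<alpha> / \<beta> \<notin> \<rat>" using irrat_log_ratio[OF q1(1) q2(1)] q2(2) by simp
  obtain u v where uv: "u > 0" "0 < real u * \<alpha> - real v * \<beta>" "real u * \<alpha> - real v * \<beta> < \<epsilon>"
    using small_step[OF \<alpha>pos \<beta>pos irr \<epsilon>(1)] by blast
  define s where "s = real u * \<alpha> - real v * \<beta>"
  have s: "0 < s" "s < 1" using uv \<epsilon> unfolding s_def by auto
  define J where "J = nat \<lceil>2 / s\<rceil>"
  have Jge: "real J \<ge> 2 / s" unfolding J_def by linarith
  define c where "c = J * v + 2"
  have c_pow: "J * v + 2 \<le> B ^ c"
  proof -
    have "c < 2 ^ c" by (rule less_exp)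
    also have "\<dots> \<le> B ^ c" using B by (simp add: power_mono)
    finally show ?thesis unfolding c_def by simp
  qed
  have c1: "c \<ge> 1" unfolding c_def by simp
  define C0 where "C0 = B ^ (c + 1) - 1"
  define R where "R = real (c + 1) + real (num_digits B q1) + real (num_digits B q2)"
  obtain a where a: "a \<ge> J * u + 1" "real a + R \<le> real B ^ a * \<alpha>"
    using growth[OF \<alpha>pos B] by blast
  define G0 where "G0 = real B ^ a * \<alpha> + real C0 * \<beta> - real (a + 1) - R + 1"
  have G0: "G0 \<ge> 0"
  proof -
    have "real C0 * \<beta> \<ge> 0" using \<beta>pos by simp
    then show ?thesis unfolding G0_def using a(2) by simp
  qed
  obtain x where x: "G0 \<le> DD B q2 x" "DD B q2 x < G0 + 1" using DD_crossing[OF B G0] by blast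
  define D where "D = DD B q2 x"
  define P where "P = PSet q2 x"
  define y where "y = (D - G0) / s"
  have y: "0 \<le> y" "y < 1 / s" using x s unfolding y_def D_def by (auto simp: divide_strict_right_mono)
  define j where "j = nat \<lceil>y\<rceil>"
  have jr: "y \<le> real j" "real j < y + 1" unfolding j_def using y by linarith+
  have j_le: "j \<le> J"
  proof -
    have "1 / s \<le> 2 / s" using s by (simp add: divide_right_mono)
    then have "real j < 2 / s + 1" using jr y by linarith
    then have "real j < real J + 1" using Jge by linarith
    then show ?thesis by linarith
  qed
  have jw: "0 \<le> G0 + real j * s - D" "G0 + real j * s - D < s"
  proof -
    have "y * s = D - G0" unfolding y_def using s by simp
    moreover have "y * s \<le> real j * s" using jr s by (simp add: mult_right_mono)
    moreover have "real j * s < (y + 1) * s" using jr s by (simp add: mult_strict_right_mono)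
    ultimately show "0 \<le> G0 + real j * s - D" "G0 + real j * s - D < s" by (auto simp: algebra_simps)
  qed
  define A where "A = B ^ a + j * u"
  define C where "C = C0 - j * v"
  have a_pow: "a < B ^ a"
  proof -
    have "a < 2 ^ a" by (rule less_exp)
    also have "\<dots> \<le> B ^ a" using B by (simp add: power_mono)
    finally show ?thesis .
  qed
  have A_lo: "B ^ a \<le> A" unfolding A_def by simp
  have A_hi: "A < B ^ (a + 1)"
  proof -
    have "j * u \<le> J * u" using j_le by simp
    then have "j * u < B ^ a" using a(1) a_pow by linarith
    then have "A < 2 * B ^ a" unfolding A_def by simp
    also have "\<dots> \<le> B * B ^ a" using B by simp
    finally show ?thesis by simp
  qed
  have a1: "a \<ge> 1" using a(1) by simp
  have A2: "A \<ge> 2"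
  proof -
    have "B ^ 1 \<le> B ^ a" using a1 B by (intro power_increasing) auto
    then show ?thesis using A_lo B by simp
  qed
  have ndA: "num_digits B A = a + 1" by (rule nd_eq[OF B]) (use A_lo A_hi in auto)
  have jv: "j * v \<le> J * v" using j_le by simp
  have Bc: "2 * B ^ c \<le> B ^ (c + 1)" using B by simp
  have C_lo: "B ^ c \<le> C" unfolding C_def C0_def using c_pow jv Bc by linarith
  have C_hi: "C < B ^ (c + 1)" unfolding C_def C0_def using Bc c_pow by linarith
  have C2: "C \<ge> 2"
  proof -
    have "B ^ 1 \<le> B ^ c" using c1 B by (intro power_increasing) auto
    then show ?thesis using C_lo B by simp
  qed
  have ndC: "num_digits B C = c + 1" by (rule nd_eq[OF B]) (use C_lo C_hi in auto)
  have jvC: "j * v \<le> C0"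
  proof (rule ccontr)
    assume "\<not> j * v \<le> C0"
    then have "C = 0" unfolding C_def by simp
    moreover have "B ^ c > 0" using B by simp
    ultimately show False using C_lo by simp
  qed
  have realC: "real C = real C0 - real j * real v"
    unfolding C_def using jvC by (simp add: of_nat_diff)
  have Pfin: "finite P" unfolding P_def by simp
  have Pprime: "\<forall>p\<in>P. prime p" and Pbig: "\<forall>p\<in>P. q2 < p" unfolding P_def PSet_def by auto
  have Ppos: "\<forall>p\<in>P. p > 0" using Pprime prime_gt_0_nat by blast
  define n where "n = q1 ^ A * (q2 ^ C * \<Prod>P)"
  have prodP: "\<Prod>P > 0" using Pfin Ppos by (simp add: prod_pos)
  have q1pos: "q1 > 0" "q2 > 0" using q1g by auto
  have npos: "n > 0" unfolding n_def using prodP q1pos by simp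
  have cop_m: "coprime m n"
  proof -
    have cp: "coprime m p" if "prime p" "m < p" for p
    proof -
      have "\<not> p dvd m" using that m by (auto dest: dvd_imp_le)
      then show ?thesis using prime_imp_coprime[OF that(1)] by (simp add: coprime_commute)
    qed
    have "coprime m q1" using cp[OF q1(1) q1(2)] .
    moreover have "coprime m q2" using cp q2 q1 by simp
    moreover have "coprime m (\<Prod>P)"
      by (rule prod_coprime_right) (use cp Pprime Pbig q1 q2 in force)
    ultimately show ?thesis unfolding n_def by simp
  qed
  have cop1: "coprime (q1 ^ A) (q2 ^ C * \<Prod>P)"
  proof -
    have "coprime q1 q2" using primes_coprime[OF q1(1) q2(1)] q2(2) by simp
    moreover have "coprime q1 (\<Prod>P)"
    proof (rule prod_coprime_right)
      fix p assume "p \<in> P"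
      then have "prime p" "q2 < p" using Pprime Pbig by auto
      then show "coprime q1 p" using primes_coprime[OF q1(1)] q2(2) by simp
    qed
    ultimately show ?thesis by simp
  qed
  have cop2: "coprime (q2 ^ C) (\<Prod>P)"
  proof -
    have "coprime q2 (\<Prod>P)"
    proof (rule prod_coprime_right)
      fix p assume "p \<in> P"
      then have "prime p" "q2 < p" using Pprime Pbig by auto
      then show "coprime q2 p" using primes_coprime[OF q2(1)] by simp
    qed
    then show ?thesis by simp
  qed
  define F where "F = fact_digits B n"
  have F_eq: "F = num_digits B q1 + (a + 1) + (num_digits B q2 + (c + 1) + (\<Sum>p\<in>P. num_digits B p))"
  proof -
    have "F = fact_digits B (q1 ^ A) + fact_digits B (q2 ^ C * \<Prod>P)"
      unfolding F_def n_def by (rule fd_mult_coprime) (use q1pos prodP cop1 in auto)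
    also have "fact_digits B (q2 ^ C * \<Prod>P) = fact_digits B (q2 ^ C) + fact_digits B (\<Prod>P)"
      by (rule fd_mult_coprime) (use q1pos prodP cop2 in auto)
    also have "fact_digits B (q1 ^ A) = num_digits B q1 + (a + 1)"
      using fd_prime_power[OF q1(1), of A B] A2 ndA by (simp add: num_digits'_def)
    also have "fact_digits B (q2 ^ C) = num_digits B q2 + (c + 1)"
      using fd_prime_power[OF q2(1), of C B] C2 ndC by (simp add: num_digits'_def)
    also have "fact_digits B (\<Prod>P) = (\<Sum>p\<in>P. num_digits B p)"
      by (rule fd_prod_primes[OF Pfin Pprime])
    finally show ?thesis .
  qed
  have logn: "log (real B) (real n) = real A * \<alpha> + real C * \<beta> + (\<Sum>p\<in>P. log (real B) (real p))"
  proof -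
    have "real n = real q1 ^ A * (real q2 ^ C * real (\<Prod>P))" unfolding n_def by simp
    moreover have "real q1 ^ A > 0" "real q2 ^ C > 0" using q1pos by auto
    moreover have "real (\<Prod>P) > 0" using prodP by (simp only: of_nat_0_less_iff)
    ultimately have "log (real B) (real n) = log (real B) (real q1 ^ A) + (log (real B) (real q2 ^ C) + log (real B) (real (\<Prod>P)))"
      by (simp add: log_mult)
    then show ?thesis unfolding \<alpha>_def \<beta>_def log_prod_nat[OF Pfin Ppos] by (simp add: log_nat_power)
  qed
  have Dsum: "D = real (\<Sum>p\<in>P. num_digits B p) - (\<Sum>p\<in>P. log (real B) (real p))"
    unfolding D_def DD_def P_def dd_def by (simp add: sum_subtractf)
  have key: "log (real B) (real n) - (real F - 1) = G0 + real j * s - D"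
    unfolding logn F_eq Dsum G0_def R_def s_def A_def realC
    by (simp add: algebra_simps)
  have F1: "F \<ge> 1" unfolding F_eq using nd_ge(2)[OF B, of q1] q1pos by simp
  have lo: "real (F - 1) \<le> log (real B) (real n)" using key jw F1 by (simp add: of_nat_diff)
  have hi: "log (real B) (real n) < real (F - 1) + \<epsilon>" using key jw F1 uv s_def by (simp add: of_nat_diff)
  have ndn: "num_digits B n = F"
  proof (rule nd_eq[OF B])
    show "B ^ (F - 1) \<le> n" by (rule pow_le_of_log[OF B npos lo])
    show "n < B ^ F" by (rule less_pow_of_log[OF B npos]) (use hi \<epsilon> F1 in \<open>simp add: of_nat_diff\<close>)
    show "F > 0" using F1 by simp
  qed
  have mn: "m * n < B ^ (num_digits B m + F - 1)"
  proof (rule less_pow_of_log[OF B])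
    show "0 < m * n" using m npos by simp
    have "log (real B) (real (m * n)) = log (real B) (real m) + log (real B) (real n)"
      using m npos by (simp add: log_mult)
    also have "\<dots> < log (real B) (real m) + real (F - 1) + \<epsilon>" using hi by simp
    also have "\<dots> = real (num_digits B m + F - 1)"
      unfolding \<epsilon>_def dd_def using F1 by (simp add: of_nat_diff)
    finally show "log (real B) (real (m * n)) < real (num_digits B m + F - 1)" .
  qed
  show ?thesis using npos cop_m ndn mn F_def by auto
qed


theorem proposition4:
  fixes B m :: nat
  assumes "B \<ge> 2"
    and "m > 0"
    and "\<forall>n::nat. n > 0 \<longrightarrow> economical B n \<longrightarrow> economical B (m * n)"
  shows "frugal B m"
proof -
  obtain n where n: "n > 0" "coprime m n" "fact_digits B n = num_digits B n"
    "m * n < B ^ (num_digits B m + num_digits B n - 1)"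
    using witness[OF assms(1,2)] by blast
  have en: "economical B n" using n(3) by (simp add: economical_def h_fun_def)
  then have emn: "economical B (m * n)" using assms(3) n(1) by blast
  define a where "a = num_digits B m"
  define b where "b = num_digits B n"
  have a: "B ^ (a - 1) \<le> m" "a > 0" using nd_ge[OF assms(1,2)] a_def by auto
  have b: "B ^ (b - 1) \<le> n" "b > 0" using nd_ge[OF assms(1) n(1)] b_def by auto
  have "B ^ (a + b - 1 - 1) = B ^ (a - 1) * B ^ (b - 1)"
    using a(2) b(2) by (simp add: power_add[symmetric])
  also have "\<dots> \<le> m * n" using a(1) b(1) by (rule mult_le_mono)
  finally have lo: "B ^ (a + b - 1 - 1) \<le> m * n" .
  have dmn: "num_digits B (m * n) = a + b - 1"
    by (rule nd_eq[OF assms(1) lo]) (use n(4) a_def b_def a(2) b(2) in auto)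
  have fmn: "fact_digits B (m * n) = fact_digits B m + fact_digits B n"
    by (rule fd_mult_coprime) (use assms(2) n in auto)
  show ?thesis
    using emn dmn fmn n(3) a(2) b(2) unfolding economical_def frugal_def h_fun_def a_def b_def
    by simp
qed

end
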